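(* Assume: (a) $\mu>\mathrm{cf}(\mu)=\theta$, $\kappa=\mu^+$, $2^\theta<\kappa$; (b) $\mathcal{A}=\{A_\alpha:\alpha\in\kappa\}$ is $\mu$-scattered, i.e. each $A_\alpha\subseteq\mu$ has $|A_\alpha|=\theta$, and whenever $I\in[\kappa]^\kappa$ and $a_\alpha\subseteq A_\alpha$ with $|a_\alpha|=\theta$ for $\alpha\in I$, then $|\bigcup\{a_\alpha:\alpha\in I\}|=\mu$; (c) $\chi<\theta$ and $\binom{\theta^+}{\theta}\rightarrow\binom{\theta}{\theta}_\chi$. Then $\binom{\mu}{\theta^+}\rightarrow\binom{\mu}{\theta}_\chi$. If one assumes the stronger $\binom{\theta^+}{\theta}\rightarrow\binom{\theta^+}{\theta}_\chi$ and $2^{\theta^+}<\kappa$, then $\binom{\mu}{\theta^+}\rightarrow\binom{\mu}{\theta^+}_\chi$.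
   Context: Notation: $\binom{\lambda}{\kappa}\rightarrow\binom{\alpha}{\beta}_\chi$ means that for every coloring $c:\lambda\times\kappa\rightarrow\chi$ there are $A\subseteq\lambda$, $B\subseteq\kappa$ with $\mathrm{otp}(A)=\alpha$, $\mathrm{otp}(B)=\beta$ and $c\upharpoonright(A\times B)$ constant. *)

theory Defs
  imports Main
begin

text \<open>Cardinals/ordinals are represented, as in HOL's BNF cardinal library, by
well-order relations (cardinals: relations r with Card_order r); the ordinal
is the field of the relation.\<close>

definition otp_is :: "'a rel \<Rightarrow> 'a set \<Rightarrow> 'b rel \<Rightarrow> bool" where
  "otp_is r A alpha \<longleftrightarrow> (Restr r A, alpha) \<in> ordIso"

definition cf_is :: "'a rel \<Rightarrow> 'b rel \<Rightarrow> bool" where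
  "cf_is mu theta \<longleftrightarrow>
     (\<exists>K. K \<subseteq> Field mu \<and> cofinal K mu \<and> (card_of K, theta) \<in> ordIso) \<and>
     (\<forall>K. K \<subseteq> Field mu \<and> cofinal K mu \<longrightarrow> (theta, card_of K) \<in> ordLeq)"

definition polarized :: "'a rel \<Rightarrow> 'b rel \<Rightarrow> 'c rel \<Rightarrow> 'd rel \<Rightarrow> 'e rel \<Rightarrow> bool" where
  "polarized lam kap alpha beta chi \<longleftrightarrow>
     (\<forall>c :: 'a \<Rightarrow> 'b \<Rightarrow> 'e.
        (\<forall>x\<in>Field lam. \<forall>y\<in>Field kap. c x y \<in> Field chi) \<longrightarrow>
        (\<exists>A B i. A \<subseteq> Field lam \<and> B \<subseteq> Field kap \<and>
            otp_is lam A alpha \<and> otp_is kap B beta \<and>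
            (\<forall>x\<in>A. \<forall>y\<in>B. c x y = i)))"

definition mu_scattered :: "'a rel \<Rightarrow> 'a rel \<Rightarrow> 'a rel \<Rightarrow> ('a \<Rightarrow> 'a set) \<Rightarrow> bool" where
  "mu_scattered mu theta kappa A \<longleftrightarrow>
     (\<forall>\<alpha>\<in>Field kappa. A \<alpha> \<subseteq> Field mu \<and> (card_of (A \<alpha>), theta) \<in> ordIso) \<and>
     (\<forall>I a. I \<subseteq> Field kappa \<and> (card_of I, kappa) \<in> ordIso \<and>
            (\<forall>\<alpha>\<in>I. a \<alpha> \<subseteq> A \<alpha> \<and> (card_of (a \<alpha>), theta) \<in> ordIso)
            \<longrightarrow> (card_of (\<Union>\<alpha>\<in>I. a \<alpha>), mu) \<in> ordIso)"

end

theory Submission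
  imports Defs
begin
unbundle cardinal_syntax



lemma wo_max:
  assumes wo: "Well_order r" and fin: "finite K" and ne: "K \<noteq> {}" and sub: "K \<subseteq> Field r"
  shows "\<exists>m\<in>K. \<forall>k\<in>K. (k,m) \<in> r"
  using fin ne sub
proof (induction K rule: finite_ne_induct)
  case (singleton x)
  then show ?case using wo by (auto simp: order_on_defs refl_on_def)
next
  case (insert x F)
  then obtain m where m: "m \<in> F" "\<forall>k\<in>F. (k,m) \<in> r" by auto
  have xF: "x \<in> Field r" "m \<in> Field r" using insert m by auto
  show ?case
  proof (cases "(x,m) \<in> r")
    case True thus ?thesis using m by auto
  next
    case False
    hence "(m,x) \<in> r" using wo xF unfolding order_on_defs total_on_def refl_on_def by metis
    hence "\<forall>k\<in>insert x F. (k,x) \<in> r" using m wo xF unfolding order_on_defs refl_on_def trans_def by blast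
    thus ?thesis by auto
  qed
qed

lemma cofinal_infinite:
  assumes wo: "Well_order r" and cof: "cofinal K r" and sub: "K \<subseteq> Field r" and ne: "Field r \<noteq> {}"
  shows "infinite K"
proof
  assume fin: "finite K"
  have "K \<noteq> {}" using cof ne unfolding cofinal_def by blast
  then obtain m where m: "m \<in> K" "\<forall>k\<in>K. (k,m) \<in> r" using wo_max[OF wo fin _ sub] by blast
  then obtain b where b: "b \<in> K" "m \<noteq> b" "(m,b) \<in> r" using cof sub unfolding cofinal_def by blast
  thus False using m wo unfolding order_on_defs antisym_def by blast
qed

lemma incr_ge:
  assumes wo: "Well_order r" and fr: "\<forall>x\<in>Field r. f x \<in> Field r"
    and mono: "\<forall>x\<in>Field r. \<forall>y\<in>Field r. (x,y) \<in> r \<and> x \<noteq> y \<longrightarrow> (f x, f y) \<in> r \<and> f x \<noteq> f y"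
  shows "x \<in> Field r \<Longrightarrow> (x, f x) \<in> r"
proof (induction x rule: wf_induct_rule[OF wo[unfolded well_order_on_def, THEN conjunct2]])
  case (1 x)
  show ?case
  proof (rule ccontr)
    assume nx: "(x, f x) \<notin> r"
    have fx: "f x \<in> Field r" using fr 1 by auto
    have "(f x, x) \<in> r" "f x \<noteq> x" using nx wo fx 1(2) unfolding order_on_defs total_on_def refl_on_def by metis+
    hence "(f x, f (f x)) \<in> r" using 1 fx by auto
    moreover have "(f (f x), f x) \<in> r" "f (f x) \<noteq> f x" using mono \<open>(f x, x) \<in> r\<close> \<open>f x \<noteq> x\<close> fx 1(2) by auto
    ultimately show False using wo unfolding order_on_defs antisym_def by blast
  qed
qed

lemma Restr_ordLeq:
  assumes wo: "Well_order r" and sub: "U \<subseteq> Field r"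
  shows "Restr r U \<le>o r"
proof (rule ccontr)
  assume nle: "\<not> Restr r U \<le>o r"
  have woU: "Well_order (Restr r U)" using Well_order_Restr[OF wo] .
  have "r <o Restr r U" using not_ordLeq_iff_ordLess[OF wo woU] nle by simp
  then obtain a where a: "a \<in> Field (Restr r U)" and iso: "r =o Restr (Restr r U) (underS (Restr r U) a)"
    using ordLess_iff_ordIso_Restr[OF woU wo] by blast
  define r' where "r' = Restr (Restr r U) (underS (Restr r U) a)"
  obtain g where g: "iso r r' g" using iso unfolding ordIso_def r'_def by blast
  have bij: "bij_betw g (Field r) (Field r')" and pres: "\<forall>x\<in>Field r. \<forall>y\<in>Field r. (x, y) \<in> r \<longleftrightarrow> (g x, g y) \<in> r'"
    using g unfolding iso_iff2 by auto
  have F: "Field r' \<subseteq> Field r" unfolding r'_def by (auto simp: Field_def)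
  have r'r: "r' \<subseteq> r" unfolding r'_def by auto
  have aF: "a \<in> Field r" using a by (auto simp: Field_def)
  have fr: "\<forall>x\<in>Field r. g x \<in> Field r" using bij F unfolding bij_betw_def by auto
  have inj: "inj_on g (Field r)" using bij unfolding bij_betw_def by auto
  have mono: "\<forall>x\<in>Field r. \<forall>y\<in>Field r. (x,y) \<in> r \<and> x \<noteq> y \<longrightarrow> (g x, g y) \<in> r \<and> g x \<noteq> g y"
  proof (intro ballI impI)
    fix x y assume xy: "x \<in> Field r" "y \<in> Field r" "(x,y) \<in> r \<and> x \<noteq> y"
    have "(g x, g y) \<in> r'" using pres xy by auto
    hence "(g x, g y) \<in> r" using r'r by auto
    moreover have "g x \<noteq> g y" using inj xy unfolding inj_on_def by auto
    ultimately show "(g x, g y) \<in> r \<and> g x \<noteq> g y" by simp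
  qed
  have "(a, g a) \<in> r" using incr_ge[OF wo fr mono aF] .
  moreover have "g a \<in> Field r'" using bij aF unfolding bij_betw_def by auto
  hence "(g a, a) \<in> r" "g a \<noteq> a" unfolding r'_def by (auto simp: Field_def underS_def)
  ultimately show False using wo unfolding order_on_defs antisym_def by blast
qed





lemma pigeon:
  assumes ck: "Card_order k" and reg: "regularCard k" and inf: "infinite (Field k)"
    and I: "|I| =o k" and gI: "g ` I \<subseteq> T" and T: "|T| <o k"
  shows "\<exists>t\<in>T. |{x\<in>I. g x = t}| =o k"
proof (rule ccontr)
  assume "\<not> ?thesis"
  hence lt: "\<forall>t\<in>T. |{x\<in>I. g x = t}| <o k"
  proof (intro ballI)
    fix t assume "\<not> (\<exists>t\<in>T. |{x\<in>I. g x = t}| =o k)" "t \<in> T"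
    hence ne: "\<not> |{x\<in>I. g x = t}| =o k" by blast
    have "|{x\<in>I. g x = t}| \<le>o |I|" by (rule card_of_mono1) auto
    hence "|{x\<in>I. g x = t}| \<le>o k" using I ordLeq_ordIso_trans by blast
    thus "|{x\<in>I. g x = t}| <o k" using ne ordLeq_iff_ordLess_or_ordIso by blast
  qed
  have "|\<Union>t\<in>T. {x\<in>I. g x = t}| <o k"
    using card_of_UNION_ordLess_infinite_Field_regularCard[OF reg _ T lt] ck inf
    unfolding cinfinite_def by blast
  moreover have "(\<Union>t\<in>T. {x\<in>I. g x = t}) = I" using gI by auto
  ultimately have "|I| <o k" by simp
  thus False using I not_ordLess_ordIso by blast
qed

lemma otp_card:
  assumes wo: "Well_order r" and sub: "B \<subseteq> Field r" and otp: "otp_is r B beta"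
  shows "|B| =o |Field beta|"
proof -
  have iso: "Restr r B =o beta" using otp unfolding otp_is_def by simp
  have FB: "Field (Restr r B) = B"
    using Refl_Field_Restr2[of r B] wo sub unfolding order_on_defs by auto
  have "|Field (Restr r B)| \<le>o |Field beta|" using card_of_mono2 iso ordIso_iff_ordLeq by blast
  moreover have "|Field beta| \<le>o |Field (Restr r B)|" using card_of_mono2 iso ordIso_iff_ordLeq ordIso_symmetric by blast
  ultimately show ?thesis using FB ordIso_iff_ordLeq by auto
qed

lemma otp_full:
  assumes c: "Card_order r" and sub: "U \<subseteq> Field r" and card: "|U| =o r"
  shows "otp_is r U r"
proof -
  have wo: "Well_order r" using c by (simp add: card_order_on_well_order_on)
  have "Restr r U \<le>o r" using Restr_ordLeq[OF wo sub] .
  moreover have "r \<le>o Restr r U"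
  proof -
    have "|U| \<le>o Restr r U" using card_of_least well_order_on_Restr[OF wo sub] by blast
    thus ?thesis using card ordIso_symmetric ordIso_ordLeq_trans by blast
  qed
  ultimately show ?thesis unfolding otp_is_def using ordIso_iff_ordLeq by blast
qed





lemma main_gen:
  fixes mu theta thetap kappa chi beta :: "'a rel" and A :: "'a \<Rightarrow> 'a set"
  assumes cmu: "Card_order mu" and cth: "Card_order theta" and cthp: "Card_order thetap"
    and ck: "Card_order kappa"
    and reg: "regularCard kappa" and kinf: "infinite (Field kappa)"
    and thinf: "infinite (Field theta)"
    and scat: "mu_scattered mu theta kappa A"
    and pol: "polarized thetap theta beta theta chi"
    and bne: "Field beta \<noteq> {}"
    and cnt: "|{B. B \<subseteq> Field thetap \<and> otp_is thetap B beta} \<times> Field chi| <o kappa"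
  shows "polarized mu thetap mu beta chi"
  unfolding polarized_def
proof (intro allI impI)
  fix c :: "'a \<Rightarrow> 'a \<Rightarrow> 'a"
  assume hc: "\<forall>x\<in>Field mu. \<forall>y\<in>Field thetap. c x y \<in> Field chi"
  define S where "S = {B. B \<subseteq> Field thetap \<and> otp_is thetap B beta}"
  have woth: "Well_order theta" using cth by (simp add: card_order_on_well_order_on)
  have wothp: "Well_order thetap" using cthp by (simp add: card_order_on_well_order_on)
  have Fth: "|Field theta| =o theta" using card_of_Field_ordIso[OF cth] .
  have step: "\<forall>\<alpha>\<in>Field kappa. \<exists>t. fst t \<subseteq> A \<alpha> \<and> |fst t| =o theta \<and> fst (snd t) \<in> S
      \<and> snd (snd t) \<in> Field chi \<and> (\<forall>x\<in>fst t. \<forall>y\<in>fst (snd t). c x y = snd (snd t))"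
  proof
    fix \<alpha> assume \<alpha>: "\<alpha> \<in> Field kappa"
    have A1: "A \<alpha> \<subseteq> Field mu" and A2: "|A \<alpha>| =o theta" using scat \<alpha> unfolding mu_scattered_def by auto
    have "|Field theta| =o |A \<alpha>|" using Fth A2 ordIso_symmetric ordIso_transitive by blast
    then obtain f where f: "bij_betw f (Field theta) (A \<alpha>)" using card_of_ordIso by blast
    define c' where "c' = (\<lambda>y x. c (f x) y)"
    have hc': "\<forall>y\<in>Field thetap. \<forall>x\<in>Field theta. c' y x \<in> Field chi"
      using hc f A1 unfolding c'_def bij_betw_def by auto
    obtain B' A' i where B': "B' \<subseteq> Field thetap" and A': "A' \<subseteq> Field theta"
      and oB: "otp_is thetap B' beta" and oA: "otp_is theta A' theta"
      and mono: "\<forall>y\<in>B'. \<forall>x\<in>A'. c' y x = i"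
      using pol[unfolded polarized_def, THEN spec[of _ c'], THEN mp, OF hc'] by blast
    have cA': "|A'| =o |Field theta|" using otp_card[OF woth A' oA] .
    have cB': "|B'| =o |Field beta|" using otp_card[OF wothp B' oB] .
    obtain y0 where y0: "y0 \<in> B'"
    proof -
      obtain h where "bij_betw h (Field beta) B'" using cB' ordIso_symmetric card_of_ordIso by blast
      thus ?thesis proof -
        assume h: "bij_betw h (Field beta) B'"
        obtain b where "b \<in> Field beta" using bne by blast
        hence "h b \<in> B'" using h unfolding bij_betw_def by blast
        thus ?thesis by (rule that)
      qed
    qed
    have "infinite A'" using cA' thinf card_of_ordIso_finite by blast
    then obtain x0 where x0: "x0 \<in> A'" by (metis finite.emptyI ex_in_conv)
    have iF: "i \<in> Field chi" proof -
      have "c' y0 x0 = i" using mono x0 y0 by blast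
      moreover have "c' y0 x0 \<in> Field chi" using hc' x0 y0 A' B' by blast
      ultimately show ?thesis by simp
    qed
    have injA': "inj_on f A'" using f A' unfolding bij_betw_def by (meson inj_on_subset)
    have "|f ` A'| =o |A'|" using injA' card_of_ordIso inj_on_imp_bij_betw ordIso_symmetric by blast
    hence ca: "|f ` A'| =o theta" using cA' Fth ordIso_transitive by blast
    have sa: "f ` A' \<subseteq> A \<alpha>" using f A' unfolding bij_betw_def by auto
    have mon: "\<forall>x\<in>f ` A'. \<forall>y\<in>B'. c x y = i" using mono unfolding c'_def by auto
    have "B' \<in> S" unfolding S_def using B' oB by auto
    thus "\<exists>t. fst t \<subseteq> A \<alpha> \<and> |fst t| =o theta \<and> fst (snd t) \<in> S
      \<and> snd (snd t) \<in> Field chi \<and> (\<forall>x\<in>fst t. \<forall>y\<in>fst (snd t). c x y = snd (snd t))"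
      using ca sa mon iF by (intro exI[of _ "(f ` A', B', i)"]) auto
  qed
  hence "\<exists>F. \<forall>\<alpha>\<in>Field kappa. fst (F \<alpha>) \<subseteq> A \<alpha> \<and> |fst (F \<alpha>)| =o theta \<and> fst (snd (F \<alpha>)) \<in> S
      \<and> snd (snd (F \<alpha>)) \<in> Field chi \<and> (\<forall>x\<in>fst (F \<alpha>). \<forall>y\<in>fst (snd (F \<alpha>)). c x y = snd (snd (F \<alpha>)))"
    by (rule bchoice)
  then obtain F where F: "\<forall>\<alpha>\<in>Field kappa. fst (F \<alpha>) \<subseteq> A \<alpha> \<and> |fst (F \<alpha>)| =o theta \<and> fst (snd (F \<alpha>)) \<in> S
      \<and> snd (snd (F \<alpha>)) \<in> Field chi \<and> (\<forall>x\<in>fst (F \<alpha>). \<forall>y\<in>fst (snd (F \<alpha>)). c x y = snd (snd (F \<alpha>)))"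
    ..
  have gI: "(\<lambda>\<alpha>. snd (F \<alpha>)) ` Field kappa \<subseteq> S \<times> Field chi"
  proof (rule image_subsetI)
    fix \<alpha> assume "\<alpha> \<in> Field kappa"
    hence "fst (snd (F \<alpha>)) \<in> S \<and> snd (snd (F \<alpha>)) \<in> Field chi" using F by blast
    thus "snd (F \<alpha>) \<in> S \<times> Field chi" by (simp add: mem_Times_iff)
  qed
  obtain t where t: "t \<in> S \<times> Field chi" and J: "|{\<alpha>\<in>Field kappa. snd (F \<alpha>) = t}| =o kappa"
    using pigeon[OF ck reg kinf card_of_Field_ordIso[OF ck] gI] cnt unfolding S_def by blast
  define J where "J = {\<alpha>\<in>Field kappa. snd (F \<alpha>) = t}"
  define U where "U = (\<Union>\<alpha>\<in>J. fst (F \<alpha>))"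
  have sc2: "\<forall>I a. I \<subseteq> Field kappa \<and> |I| =o kappa \<and>
            (\<forall>\<alpha>\<in>I. a \<alpha> \<subseteq> A \<alpha> \<and> |a \<alpha>| =o theta)
            \<longrightarrow> |\<Union>\<alpha>\<in>I. a \<alpha>| =o mu" using scat unfolding mu_scattered_def by (rule conjunct2)
  have cU: "|U| =o mu" unfolding U_def
  proof (rule sc2[rule_format])
    show "J \<subseteq> Field kappa \<and> |J| =o kappa \<and> (\<forall>\<alpha>\<in>J. fst (F \<alpha>) \<subseteq> A \<alpha> \<and> |fst (F \<alpha>)| =o theta)"
      using J F unfolding J_def by auto
  qed
  have sU: "U \<subseteq> Field mu" using F scat unfolding U_def J_def mu_scattered_def by blast
  have oU: "otp_is mu U mu" using otp_full[OF cmu sU cU] .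
  have mono: "\<forall>x\<in>U. \<forall>y\<in>fst t. c x y = snd t"
  proof (intro ballI)
    fix x y assume x: "x \<in> U" and y: "y \<in> fst t"
    then obtain \<alpha> where al: "\<alpha> \<in> Field kappa" "snd (F \<alpha>) = t" "x \<in> fst (F \<alpha>)" unfolding U_def J_def by blast
    have "\<forall>x\<in>fst (F \<alpha>). \<forall>y\<in>fst (snd (F \<alpha>)). c x y = snd (snd (F \<alpha>))" using F al(1) by blast
    thus "c x y = snd t" using al y by simp
  qed
  show "\<exists>Aa B i. Aa \<subseteq> Field mu \<and> B \<subseteq> Field thetap \<and> otp_is mu Aa mu \<and> otp_is thetap B beta \<and>
                (\<forall>x\<in>Aa. \<forall>y\<in>B. c x y = i)"
    proof (intro exI conjI)
    show "U \<subseteq> Field mu" by (rule sU)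
    show "otp_is mu U mu" by (rule oU)
    show "fst t \<subseteq> Field thetap" using t unfolding S_def by (simp add: mem_Times_iff)
    show "otp_is thetap (fst t) beta" using t unfolding S_def by (simp add: mem_Times_iff)
    show "\<forall>x\<in>U. \<forall>y\<in>fst t. c x y = snd t" by (rule mono)
  qed
qed





lemma Pow_inj_le:
  assumes "|X| \<le>o |Y|" shows "|Pow X| \<le>o |Pow Y|"
proof -
  obtain p where p: "inj_on p X" "p ` X \<subseteq> Y" using card_of_ordLeq[THEN iffD2, OF assms] by blast
  have "inj_on (image p) (Pow X)" using inj_on_image_Pow[OF p(1)] .
  moreover have "image p ` Pow X \<subseteq> Pow Y" using p(2) by auto
  ultimately show ?thesis by (intro card_of_ordLeq[THEN iffD1] exI[of _ "image p"]) simp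
qed




lemma count2:
  assumes inf: "infinite P" and chi: "|C| \<le>o |P|" and pw: "|Pow P| <o kappa"
    and S: "S \<subseteq> Pow P"
  shows "|S \<times> C| <o kappa"
proof -
  have c1: "|C| \<le>o |Pow P|" by (rule ordLeq_transitive[OF chi ordLess_imp_ordLeq[OF card_of_Pow]])
  have "|S \<times> C| \<le>o |Pow P \<times> C|" by (rule card_of_Times_mono1[OF card_of_mono1[OF S]])
  also have "|Pow P \<times> C| \<le>o |Pow P \<times> Pow P|" by (rule card_of_Times_mono2[OF c1])
  also have "|Pow P \<times> Pow P| =o |Pow P|"
  proof -
    have "infinite (Pow P)" using inf by simp
    moreover have "Pow P \<noteq> {}" by auto
    ultimately show ?thesis
      using card_of_Times_infinite[of "Pow P" "Pow P", OF _ _ ordLeq_reflexive[OF card_of_Well_order]] by blast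
  qed
  finally show ?thesis using pw by (rule ordLeq_ordLess_trans)
qed




lemma count1:
  fixes theta :: "'a rel" and thetap :: "'b rel"
  assumes cth: "Card_order theta" and cthp: "Card_order thetap"
    and inf: "infinite (Field theta)" and thp: "thetap =o cardSuc theta"
    and chi: "|C| \<le>o |Field theta|" and pw: "|Pow (Field theta)| <o kappa"
  shows "|{B. B \<subseteq> Field thetap \<and> otp_is thetap B theta} \<times> C| <o kappa"
proof -
  define T where "T = Field theta"
  define S where "S = {B. B \<subseteq> Field thetap \<and> otp_is thetap B theta}"
  define X where "X = T \<times> T"
  have wothp: "Well_order thetap" using cthp by (simp add: card_order_on_well_order_on)
  have "theta <o |Pow T|"
    by (rule ordIso_ordLess_trans[OF ordIso_symmetric[OF card_of_Field_ordIso[OF cth]]]) (simp add: T_def card_of_Pow)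
  hence "cardSuc theta \<le>o |Pow T|" using cardSuc_ordLess_ordLeq[OF cth card_of_Card_order[of "Pow T"]] by simp
  hence "|Field thetap| \<le>o |Pow T|"
    by (rule ordIso_ordLeq_trans[OF ordIso_transitive[OF card_of_Field_ordIso[OF cthp] thp]])
  then obtain h where h: "inj_on h (Field thetap)" "h ` Field thetap \<subseteq> Pow T"
    using card_of_ordLeq[THEN iffD2] by metis
  obtain e where e: "inj_on e C" "e ` C \<subseteq> T" using card_of_ordLeq[THEN iffD2, OF chi] unfolding T_def by metis
  define s where "s = (\<lambda>B::'b set. SOME s::'a \<Rightarrow> 'b. bij_betw s T B)"
  have sB: "bij_betw (s B) T B" if "B \<in> S" for B
  proof -
    have "|B| =o |T|" using otp_card[OF wothp] that unfolding S_def T_def by blast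
    hence "\<exists>s. bij_betw s T B" using card_of_ordIso[THEN iffD2, OF ordIso_symmetric] by metis
    thus ?thesis unfolding s_def by (rule someI_ex)
  qed
  define code where "code = (\<lambda>B. {(x,z). x \<in> T \<and> z \<in> h (s B x)})"
  have codeinj: "inj_on code S"
  proof (rule inj_onI)
    fix B1 B2 assume B: "B1 \<in> S" "B2 \<in> S" and eq: "code B1 = code B2"
    have "s B1 x = s B2 x" if x: "x \<in> T" for x
    proof -
      have m1: "s B1 x \<in> Field thetap" "s B2 x \<in> Field thetap"
        using sB[OF B(1)] sB[OF B(2)] x B unfolding bij_betw_def S_def by auto
      have "h (s B1 x) = {z. (x,z) \<in> code B1}" using m1 h x unfolding code_def by auto
      also have "\<dots> = {z. (x,z) \<in> code B2}" using eq by simp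
      also have "\<dots> = h (s B2 x)" using m1 h x unfolding code_def by auto
      finally show ?thesis using h(1) m1 unfolding inj_on_def by blast
    qed
    hence "s B1 ` T = s B2 ` T" by auto
    thus "B1 = B2" using sB[OF B(1)] sB[OF B(2)] unfolding bij_betw_def by simp
  qed
  define \<Phi> where "\<Phi> = (\<lambda>(B,i). (code B, (e i, e i)))"
  have hs: "h (s B x) \<subseteq> T" if "B \<in> S" "x \<in> T" for B x
  proof -
    have "s B x \<in> Field thetap" using sB[OF that(1)] that unfolding bij_betw_def S_def by auto
    thus ?thesis using h(2) by auto
  qed
  have "inj_on \<Phi> (S \<times> C)" using codeinj e(1) unfolding \<Phi>_def inj_on_def by auto
  moreover have "\<Phi> ` (S \<times> C) \<subseteq> Pow X \<times> X" using e(2) hs unfolding \<Phi>_def X_def code_def by fastforce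
  ultimately have "|S \<times> C| \<le>o |Pow X \<times> X|" by (intro card_of_ordLeq[THEN iffD1] exI[of _ \<Phi>]) simp
  also have "|Pow X \<times> X| =o |Pow X|"
  proof -
    have Tne: "T \<noteq> {}" using inf unfolding T_def by (metis finite.emptyI)
    have "infinite X" using inf Tne unfolding X_def T_def by (simp add: finite_cartesian_product_iff)
    moreover have "X \<noteq> {}" using Tne unfolding X_def by auto
    ultimately show ?thesis using card_of_Times_infinite[of "Pow X" X, OF _ _ ordLess_imp_ordLeq[OF card_of_Pow]] by simp
  qed
  also have "|Pow X| \<le>o |Pow T|"
  proof (rule Pow_inj_le)
    have "T \<noteq> {}" using inf unfolding T_def by (metis finite.emptyI)
    hence "|X| =o |T|" using card_of_Times_infinite[of T T, OF _ _ ordLeq_reflexive[OF card_of_Well_order]] inf unfolding X_def T_def by simp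
    thus "|X| \<le>o |T|" using ordIso_iff_ordLeq by blast
  qed
  finally show ?thesis using pw unfolding S_def T_def by (rule ordLeq_ordLess_trans)
qed




theorem claim3p2:
  fixes mu theta thetap kappa chi :: "'a rel"
    and A :: "'a \<Rightarrow> 'a set"
  assumes "Card_order mu" "Card_order theta" "Card_order thetap"
    and "Card_order kappa" "Card_order chi"
    and "(theta, mu) \<in> ordLess"
    and "cf_is mu theta"
    and "(kappa, cardSuc mu) \<in> ordIso"
    and "(thetap, cardSuc theta) \<in> ordIso"
    and "(card_of (Pow (Field theta)), kappa) \<in> ordLess"
    and "mu_scattered mu theta kappa A"
    and "(chi, theta) \<in> ordLess"
    and "polarized thetap theta theta theta chi"
  shows "polarized mu thetap mu theta chi \<and>
         ((polarized thetap theta thetap theta chi \<and>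
           (card_of (Pow (Field thetap)), kappa) \<in> ordLess)
          \<longrightarrow> polarized mu thetap mu thetap chi)"
proof -
  note cmu = assms(1) and cth = assms(2) and cthp = assms(3) and ck = assms(4)
  have wmu: "Well_order mu" using cmu by (simp add: card_order_on_well_order_on)
  have Fmu: "Field mu \<noteq> {}"
  proof
    assume e: "Field mu = {}"
    have "embed mu theta id" unfolding embed_def using e by simp
    thus False using assms(6) ordLess_iff by blast
  qed
  obtain K where K: "K \<subseteq> Field mu" "cofinal K mu" "|K| =o theta"
    using assms(7) unfolding cf_is_def by blast
  have Kinf: "infinite K" using cofinal_infinite[OF wmu K(2) K(1) Fmu] .
  have muinf: "infinite (Field mu)" using Kinf K(1) infinite_super by blast
  have thinf: "infinite (Field theta)"
    using card_of_ordIso_finite_Field[OF cth ordIso_symmetric[OF K(3)]] Kinf by simp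
  have Cmu: "Cinfinite mu" using muinf cmu unfolding cinfinite_def by simp
  have Cth: "Cinfinite theta" using thinf cth unfolding cinfinite_def by simp
  have Cs: "Cinfinite (cardSuc mu)" using Cinfinite_cardSuc[OF Cmu] .
  have reg: "regularCard kappa"
    using regularCard_ordIso[OF ordIso_symmetric[OF assms(8)] Cs regularCard_cardSuc[OF Cmu]] .
  have Ck: "Cinfinite kappa" using Cinfinite_cong[OF ordIso_symmetric[OF assms(8)] Cs] .
  hence kinf: "infinite (Field kappa)" unfolding cinfinite_def by simp
  have Cthp: "Cinfinite thetap" using Cinfinite_cong[OF ordIso_symmetric[OF assms(9)] Cinfinite_cardSuc[OF Cth]] .
  hence thpinf: "infinite (Field thetap)" unfolding cinfinite_def by simp
  have thne: "Field theta \<noteq> {}" using thinf by (metis finite.emptyI)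
  have thpne: "Field thetap \<noteq> {}" using thpinf by (metis finite.emptyI)
  have chith: "|Field chi| \<le>o |Field theta|" using card_of_mono2[OF ordLess_imp_ordLeq[OF assms(12)]] .
  have ththp: "theta \<le>o thetap"
    using ordLess_imp_ordLeq[OF ordLess_ordIso_trans[OF cardSuc_greater[OF cth] ordIso_symmetric[OF assms(9)]]] .
  have chithp: "|Field chi| \<le>o |Field thetap|"
    using card_of_mono2[OF ordLeq_transitive[OF ordLess_imp_ordLeq[OF assms(12)] ththp]] .
  have p1: "polarized mu thetap mu theta chi"
  proof (rule main_gen[OF cmu cth cthp ck reg kinf thinf assms(11) assms(13) thne])
    show "|{B. B \<subseteq> Field thetap \<and> otp_is thetap B theta} \<times> Field chi| <o kappa"
      using count1[OF cth cthp thinf assms(9) chith assms(10)] .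
  qed
  have p2: "polarized mu thetap mu thetap chi"
    if h: "polarized thetap theta thetap theta chi" "|Pow (Field thetap)| <o kappa"
  proof (rule main_gen[OF cmu cth cthp ck reg kinf thinf assms(11) h(1) thpne])
    show "|{B. B \<subseteq> Field thetap \<and> otp_is thetap B thetap} \<times> Field chi| <o kappa"
      by (rule count2[OF thpinf chithp h(2)]) blast
  qed
  show ?thesis using p1 p2 by blast
qed

end
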